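(* Let $f$ be as in the standing setting and satisfy quadratic functional growth with constant $\kappa_f>0$: $f(x)-f^*\ge\frac{\kappa_f}{2}\|x-\bar x\|^2$ for all $x\in X$. Let $x^0\in X$ and $x^{k+1}=[x^k-\frac1{L_f}\nabla f(x^k)]_X$ for $k\ge0$, and $\bar x^k=[x^k]_{X^*}$. Then, with $\mu_f=\kappa_f/L_f$, $$\|x^k-\bar x^k\|^2\le\left(\frac{1}{1+\mu_f}\right)^k\|x^0-\bar x^0\|^2\qquad\forall k\ge0.$$
   Context: Standing setting: $X\subseteq\mathbb{R}^n$ is a nonempty closed convex set; $f:X\to\mathbb{R}$ is convex and continuously differentiable, with $L_f$-Lipschitz continuous gradient on $X$ ($L_f>0$). Consider $f^*=\min_{x\in X}f(x)$ with optimal set $X^*$ nonempty and closed and $f^*$ finite. $\|\cdot\|$ is the Euclidean norm, $[u]_S$ is the Euclidean projection onto a closed convex set $S$, and $\bar x=[x]_{X^*}$. *)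

theory Defs
  imports "HOL-Analysis.Analysis"
begin

end

theory Submission imports Defs begin

lemma line_deriv:
  fixes X :: "'a::euclidean_space set" and f :: "'a \<Rightarrow> real"
  assumes cX: "convex X" and x: "x \<in> X" and z: "z \<in> X"
    and f_grad: "\<And>y. y \<in> X \<Longrightarrow> (f has_derivative (\<lambda>h. gradf y \<bullet> h)) (at y within X)"
    and t: "t \<in> {0..1}"
  shows "((\<lambda>t. f (x + t *\<^sub>R (z - x))) has_derivative (\<lambda>s. s * (gradf (x + t *\<^sub>R (z - x)) \<bullet> (z - x)))) (at t within {0..1})"
proof -
  have sub: "(\<lambda>t. x + t *\<^sub>R (z - x)) ` {0..1} \<subseteq> X"
  proof
    fix w assume "w \<in> (\<lambda>t. x + t *\<^sub>R (z - x)) ` {0..1}"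
    then obtain s where s: "s \<in> {0..1}" "w = x + s *\<^sub>R (z - x)" by auto
    have "w = (1 - s) *\<^sub>R x + s *\<^sub>R z" using s by (simp add: algebra_simps)
    then show "w \<in> X" using cX x z s by (simp add: convex_def)
  qed
  have l: "((\<lambda>t. x + t *\<^sub>R (z - x)) has_derivative (\<lambda>s. s *\<^sub>R (z - x))) (at t within {0..1})"
    by (auto intro!: derivative_eq_intros)
  have "(f has_derivative (\<lambda>h. gradf (x + t *\<^sub>R (z - x)) \<bullet> h)) (at (x + t *\<^sub>R (z - x)) within (\<lambda>t. x + t *\<^sub>R (z - x)) ` {0..1})"
    using f_grad sub t by (meson has_derivative_subset image_subset_iff)
  from diff_chain_within[OF l this] show ?thesis by (simp add: o_def)
qed

lemma descent:
  fixes X :: "'a::euclidean_space set" and f :: "'a \<Rightarrow> real"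
  assumes cX: "convex X" and x: "x \<in> X" and y: "y \<in> X"
    and f_grad: "\<And>y. y \<in> X \<Longrightarrow> (f has_derivative (\<lambda>h. gradf y \<bullet> h)) (at y within X)"
    and grad_lip: "\<And>y z. y \<in> X \<Longrightarrow> z \<in> X \<Longrightarrow> norm (gradf y - gradf z) \<le> L * norm (y - z)"
  shows "f y \<le> f x + gradf x \<bullet> (y - x) + L / 2 * (norm (y - x))\<^sup>2"
proof -
  define l where "l t = x + t *\<^sub>R (y - x)" for t
  define D where "D = gradf x \<bullet> (y - x)"
  define N where "N = (norm (y - x))\<^sup>2"
  define \<psi> where "\<psi> t = f (l t) - t * D - L / 2 * t^2 * N" for t
  have lX: "l t \<in> X" if "t \<in> {0..1}" for t
  proof -
    have "l t = (1 - t) *\<^sub>R x + t *\<^sub>R y" by (simp add: l_def algebra_simps)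
    then show ?thesis using cX x y that by (simp add: convex_def)
  qed
  have der: "(\<psi> has_derivative (\<lambda>s. s * (gradf (l t) \<bullet> (y - x) - D - L * t * N))) (at t within {0..1})"
    if "0 \<le> t" "t \<le> 1" for t
  proof -
    have "((\<lambda>t. f (l t)) has_derivative (\<lambda>s. s * (gradf (l t) \<bullet> (y - x)))) (at t within {0..1})"
      unfolding l_def using line_deriv[OF cX x y f_grad] that by auto
    then have "(\<psi> has_derivative (\<lambda>s. s * (gradf (l t) \<bullet> (y - x)) - s * D - L / 2 * (2 * t * s) * N)) (at t within {0..1})"
      unfolding \<psi>_def by (auto intro!: derivative_eq_intros)
    then show ?thesis by (simp add: algebra_simps)
  qed
  obtain s where s: "s \<in> {0..1}" and eq: "\<psi> 1 - \<psi> 0 = (1 - 0) * (gradf (l s) \<bullet> (y - x) - D - L * s * N)"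
    using mvt_very_simple[of 0 1 \<psi>, OF _ der] by auto
  have "(gradf (l s) - gradf x) \<bullet> (y - x) \<le> norm (gradf (l s) - gradf x) * norm (y - x)"
    by (rule norm_cauchy_schwarz)
  also have "\<dots> \<le> L * norm (l s - x) * norm (y - x)"
    using grad_lip[OF lX[OF s] x] by (simp add: mult_right_mono)
  also have "\<dots> = L * s * N"
    using s by (simp add: l_def N_def power2_eq_square)
  finally have "gradf (l s) \<bullet> (y - x) - D - L * s * N \<le> 0"
    by (simp add: D_def inner_diff_left)
  with eq have "\<psi> 1 \<le> \<psi> 0" by simp
  then show ?thesis by (simp add: \<psi>_def l_def D_def N_def)
qed

lemma tangent:
  fixes X :: "'a::euclidean_space set" and f :: "'a \<Rightarrow> real"
  assumes cX: "convex X" and x: "x \<in> X" and z: "z \<in> X"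
    and f_convex: "convex_on X f"
    and f_grad: "\<And>y. y \<in> X \<Longrightarrow> (f has_derivative (\<lambda>h. gradf y \<bullet> h)) (at y within X)"
  shows "f x + gradf x \<bullet> (z - x) \<le> f z"
proof -
  define \<phi> where "\<phi> t = f (x + t *\<^sub>R (z - x))" for t
  define D where "D = gradf x \<bullet> (z - x)"
  have "(\<phi> has_derivative (\<lambda>s. s * D)) (at 0 within {0..1})"
    unfolding \<phi>_def D_def using line_deriv[OF cX x z f_grad, of 0] by simp
  then have "(\<phi> has_field_derivative D) (at 0 within {0..1})"
  proof -
    have "(\<lambda>s. s * D) = (*) D" by (auto simp: mult.commute)
    then show ?thesis using \<open>(\<phi> has_derivative (\<lambda>s. s * D)) (at 0 within {0..1})\<close>
      unfolding has_field_derivative_def by simp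
  qed
  then have lim: "((\<lambda>y. (\<phi> y - \<phi> 0) / (y - 0)) \<longlongrightarrow> D) (at_right 0)"
    unfolding has_field_derivative_iff by (simp add: at_within_Icc_at_right)
  have ev: "eventually (\<lambda>y. (\<phi> y - \<phi> 0) / (y - 0) \<le> \<phi> 1 - \<phi> 0) (at_right (0::real))"
    using eventually_at_right_real[of 0 1]
  proof (rule eventually_mono)
    fix y :: real assume y: "y \<in> {0<..<1}"
    have "\<phi> y = f ((1 - y) *\<^sub>R x + y *\<^sub>R z)" by (simp add: \<phi>_def algebra_simps)
    also have "\<dots> \<le> (1 - y) * f x + y * f z"
      using convex_onD[OF f_convex] y x z by auto
    finally have "\<phi> y - \<phi> 0 \<le> y * (\<phi> 1 - \<phi> 0)" by (simp add: \<phi>_def algebra_simps)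
    then show "(\<phi> y - \<phi> 0) / (y - 0) \<le> \<phi> 1 - \<phi> 0" using y by (simp add: divide_le_eq mult.commute)
  qed simp
  have "D \<le> \<phi> 1 - \<phi> 0"
    by (rule tendsto_upperbound[OF lim ev]) simp
  then show ?thesis by (simp add: \<phi>_def D_def)
qed

theorem theorem12:
  fixes X :: "'a::euclidean_space set"
    and f :: "'a \<Rightarrow> real"
    and gradf :: "'a \<Rightarrow> 'a"
    and Lf kappa :: real
    and x :: "nat \<Rightarrow> 'a"
  assumes X_closed: "closed X" and X_convex: "convex X" and X_ne: "X \<noteq> {}"
    and f_convex: "convex_on X f"
    and f_grad: "\<And>y. y \<in> X \<Longrightarrow> (f has_derivative (\<lambda>h. gradf y \<bullet> h)) (at y within X)"
    and grad_cont: "continuous_on X gradf"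
    and Lf_pos: "Lf > 0"
    and grad_lip: "\<And>y z. y \<in> X \<Longrightarrow> z \<in> X \<Longrightarrow> norm (gradf y - gradf z) \<le> Lf * norm (y - z)"
    and fstar_bdd: "bdd_below (f ` X)"
    and Xstar_ne: "{y \<in> X. f y = Inf (f ` X)} \<noteq> {}"
    and kappa_pos: "kappa > 0"
    and qfg: "\<And>y. y \<in> X \<Longrightarrow>
      f y - Inf (f ` X) \<ge> kappa / 2 * (norm (y - closest_point {z \<in> X. f z = Inf (f ` X)} y))\<^sup>2"
    and x0: "x 0 \<in> X"
    and x_step: "\<And>k. x (Suc k) = closest_point X (x k - (1 / Lf) *\<^sub>R gradf (x k))"
  shows "\<forall>k. (norm (x k - closest_point {z \<in> X. f z = Inf (f ` X)} (x k)))\<^sup>2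
           \<le> (1 / (1 + kappa / Lf)) ^ k * (norm (x 0 - closest_point {z \<in> X. f z = Inf (f ` X)} (x 0)))\<^sup>2"
proof -
  define fs where "fs = Inf (f ` X)"
  define S where "S = {z \<in> X. f z = fs}"
  have contf: "continuous_on X f" using f_grad by (rule has_derivative_continuous_on)
  have S_closed: "closed S" unfolding S_def
    using continuous_closed_preimage_constant[OF contf X_closed] by simp
  have S_ne: "S \<noteq> {}" using Xstar_ne by (simp add: S_def fs_def)
  have xX: "x k \<in> X" for k
    by (cases k) (auto simp: x0 x_step intro!: closest_point_in_set X_closed X_ne)
  define r where "r = 1 / (1 + kappa / Lf)"
  have r_nn: "r \<ge> 0" unfolding r_def using kappa_pos Lf_pos by simp
  have step: "(norm (x (Suc k) - closest_point S (x (Suc k))))\<^sup>2 \<le> r * (norm (x k - closest_point S (x k)))\<^sup>2" for k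
  proof -
    define y where "y = x k"
    define g where "g = gradf y"
    define y' where "y' = x (Suc k)"
    define yb where "yb = closest_point S y"
    have y: "y \<in> X" and y': "y' \<in> X" using xX by (auto simp: y_def y'_def)
    have ybS: "yb \<in> S" unfolding yb_def using closest_point_in_set[OF S_closed S_ne] .
    then have yb: "yb \<in> X" and fyb: "f yb = fs" by (auto simp: S_def)
    have y'def: "y' = closest_point X (y - (1 / Lf) *\<^sub>R g)" by (simp add: y'_def y_def g_def x_step)
    define a where "a = y - y'"
    define b where "b = y' - yb"
    have desc: "f y' \<le> f y + g \<bullet> (y' - y) + Lf / 2 * (norm (y' - y))\<^sup>2"
      unfolding g_def by (rule descent[OF X_convex y y' f_grad grad_lip])
    have tan: "f y + g \<bullet> (yb - y) \<le> f yb"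
      unfolding g_def by (rule tangent[OF X_convex y yb f_convex f_grad])
    have proj: "(y - (1 / Lf) *\<^sub>R g - y') \<bullet> (yb - y') \<le> 0"
      unfolding y'def by (rule closest_point_dot[OF X_convex X_closed yb])
    have e1: "y' - y = - a" "yb - y = - (a + b)" "yb - y' = - b" "y - yb = a + b"
      by (auto simp: a_def b_def)
    have desc2: "f y' \<le> f y - g \<bullet> a + Lf / 2 * (a \<bullet> a)"
      using desc by (simp add: e1 power2_norm_eq_inner inner_minus_right)
    have tan2: "f y - g \<bullet> a - g \<bullet> b \<le> f yb"
      using tan by (simp add: e1 inner_minus_right inner_add_right inner_diff_right)
    have proj2: "(1 / Lf) * (g \<bullet> b) \<le> a \<bullet> b"
      using proj unfolding e1 by (simp add: a_def inner_diff_left inner_minus_right algebra_simps)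
    have "g \<bullet> b \<le> Lf * (a \<bullet> b)"
      using proj2 Lf_pos by (simp add: field_simps)
    then have key: "f y' - fs \<le> Lf / 2 * ((a + b) \<bullet> (a + b) - b \<bullet> b)"
      using desc2 tan2 fyb by (simp add: inner_add_left inner_add_right inner_commute algebra_simps)
    define d where "d = norm (y - yb)"
    define d' where "d' = norm (y' - closest_point S y')"
    have "dist y' (closest_point S y') \<le> dist y' yb"
      by (rule closest_point_le[OF S_closed ybS])
    then have d'le: "d' \<le> norm b" by (simp add: d'_def b_def dist_norm)
    have "kappa / 2 * d'\<^sup>2 \<le> f y' - fs"
      using qfg[OF y'] by (simp add: d'_def S_def fs_def)
    also have "\<dots> \<le> Lf / 2 * (d\<^sup>2 - (norm b)\<^sup>2)"
      using key by (simp add: d_def e1 power2_norm_eq_inner)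
    also have "\<dots> \<le> Lf / 2 * (d\<^sup>2 - d'\<^sup>2)"
      using d'le Lf_pos by (simp add: d'_def power_mono)
    finally have "(kappa + Lf) * d'\<^sup>2 \<le> Lf * d\<^sup>2" by (simp add: algebra_simps)
    then have "d'\<^sup>2 \<le> Lf * d\<^sup>2 / (kappa + Lf)"
      using kappa_pos Lf_pos by (simp add: pos_le_divide_eq mult.commute)
    also have "Lf * d\<^sup>2 / (kappa + Lf) = r * d\<^sup>2"
      using kappa_pos Lf_pos by (simp add: r_def field_simps)
    finally show ?thesis by (simp add: d'_def d_def y'_def y_def yb_def)
  qed
  have "(norm (x k - closest_point S (x k)))\<^sup>2 \<le> r ^ k * (norm (x 0 - closest_point S (x 0)))\<^sup>2" for k
  proof (induction k)
    case (Suc k)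
    have "(norm (x (Suc k) - closest_point S (x (Suc k))))\<^sup>2 \<le> r * (norm (x k - closest_point S (x k)))\<^sup>2"
      by (rule step)
    also have "\<dots> \<le> r * (r ^ k * (norm (x 0 - closest_point S (x 0)))\<^sup>2)"
      using Suc r_nn by (rule mult_left_mono)
    finally show ?case by (simp add: mult.assoc)
  qed simp
  then show ?thesis by (simp add: S_def fs_def r_def)
qed

end
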